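(* Let $h\in\mathbb{Z}$ and $n\ge0$. The number of partitions $\lambda\vdash n$ having an $h$-fixed hook arising from a part of size $1$ equals the number of partitions of $n-h$ that have at least $1-h$ parts and in which the part $1$ occurs exactly once (this number being $0$ if $n-h<0$). Equivalently, the generating function of the former is $$q^{h+1}\left(\frac{1}{(q^2;q)_\infty}-\sum_{m=0}^{-h-1}\frac{q^{2m}}{(q;q)_m}\right),$$ where the finite sum is empty for $h\ge0$.
   Context: A partition $\lambda=(\lambda_1\ge\cdots\ge\lambda_t>0)$ of $n$ has first-column hook lengths $h_{s,1}(\lambda)=\lambda_s+(t-s)$. An $h$-fixed hook arising from a part of size $k$ is an index $s$ with $h_{s,1}(\lambda)=s+h$ and $\lambda_s=k$. Notation: $(a;q)_\infty=\prod_{j\ge0}(1-aq^j)$, $(q;q)_m=\prod_{j=1}^m(1-q^j)$. *)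

theory Defs
  imports Main
begin

text \<open>A partition of n is represented as a weakly decreasing list of positive
  naturals (lambda_1 >= ... >= lambda_t > 0) summing to n. Index s ranges over 1..t,
  and lambda_s = xs ! (s - 1).\<close>

definition is_partition :: "nat list \<Rightarrow> nat \<Rightarrow> bool" where
  "is_partition xs n \<longleftrightarrow> sorted_wrt (\<ge>) xs \<and> (\<forall>x\<in>set xs. 0 < x) \<and> sum_list xs = n"

definition first_col_hook :: "nat list \<Rightarrow> nat \<Rightarrow> nat" where
  "first_col_hook xs s = xs ! (s - 1) + (length xs - s)"

definition has_fixed_hook_from_part :: "int \<Rightarrow> nat \<Rightarrow> nat list \<Rightarrow> bool" where
  "has_fixed_hook_from_part h k xs \<longleftrightarrow>
     (\<exists>s\<in>{1..length xs}. int (first_col_hook xs s) = int s + h \<and> xs ! (s - 1) = k)"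

end

theory Submission
  imports Defs
begin

lemma sorted_split:
  "sorted_wrt (\<ge>) (xs::nat list) \<Longrightarrow> xs = filter (\<lambda>x. k \<le> x) xs @ filter (\<lambda>x. \<not> k \<le> x) xs"
proof (induction xs)
  case Nil then show ?case by simp
next
  case (Cons x xs)
  show ?case
  proof (cases "k \<le> x")
    case True then show ?thesis using Cons by simp
  next
    case False
    then have "\<forall>y\<in>set xs. \<not> k \<le> y" using Cons.prems by auto
    then show ?thesis using False by (simp add: filter_False)
  qed
qed

definition PP :: "int \<Rightarrow> nat \<Rightarrow> (nat list \<times> nat) set" where
  "PP h n = {(mu, j). sorted_wrt (\<ge>) mu \<and> (\<forall>x\<in>set mu. 2 \<le> x) \<and> int j \<ge> - h - int (length mu)
      \<and> int (sum_list mu) + int (length mu) + h + 1 + 2 * int j = int n}"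

definition ff :: "int \<Rightarrow> nat list \<times> nat \<Rightarrow> nat list" where
  "ff h p = fst p @ replicate (nat (int (length (fst p)) + h + 1 + 2 * int (snd p))) 1"

definition gg :: "nat list \<times> nat \<Rightarrow> nat list" where
  "gg p = map Suc (fst p) @ replicate (snd p) 2 @ [1]"

lemma ff_inj: "inj_on (ff h) (PP h n)"
proof (rule inj_onI)
  fix p q assume p: "p \<in> PP h n" and q: "q \<in> PP h n" and e: "ff h p = ff h q"
  obtain mu j where pp: "p = (mu, j)" by (cases p)
  obtain nu i where qq: "q = (nu, i)" by (cases q)
  have fm: "filter (\<lambda>x. 2 \<le> x) (ff h p) = mu" using p unfolding pp ff_def PP_def
    by (auto simp: filter_True)
  have fn: "filter (\<lambda>x. 2 \<le> x) (ff h q) = nu" using q unfolding qq ff_def PP_def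
    by (auto simp: filter_True)
  have mn: "mu = nu" using fm fn e by simp
  have m1: "int (length mu) + h + 1 + 2 * int j \<ge> 0" using p unfolding pp PP_def by auto
  have m2: "int (length nu) + h + 1 + 2 * int i \<ge> 0" using q unfolding qq PP_def by auto
  have "length (ff h p) = length (ff h q)" using e by simp
  then have "i = j" using m1 m2 mn unfolding pp qq ff_def by simp
  then show "p = q" using pp qq mn by simp
qed

lemma gg_inj: "inj_on gg (PP h n)"
proof (rule inj_onI)
  fix p q assume p: "p \<in> PP h n" and q: "q \<in> PP h n" and e: "gg p = gg q"
  obtain mu j where pp: "p = (mu, j)" by (cases p)
  obtain nu i where qq: "q = (nu, i)" by (cases q)
  have "filter (\<lambda>x. 3 \<le> x) (gg p) = map Suc mu" using p unfolding pp gg_def PP_def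
    by (auto simp: filter_True filter_False)
  moreover have "filter (\<lambda>x. 3 \<le> x) (gg q) = map Suc nu" using q unfolding qq gg_def PP_def
    by (auto simp: filter_True filter_False)
  ultimately have mn: "mu = nu" using e by (simp add: inj_map_eq_map)
  have "length (gg p) = length (gg q)" using e by simp
  then have "i = j" using mn unfolding pp qq gg_def by simp
  then show "p = q" using pp qq mn by simp
qed

lemma A_sub: 
  assumes "is_partition xs n" "has_fixed_hook_from_part h 1 xs"
  shows "xs \<in> ff h ` PP h n"
proof -
  have so: "sorted_wrt (\<ge>) xs" and pos: "\<forall>x\<in>set xs. 0 < x" and su: "sum_list xs = n"
    using assms(1) unfolding is_partition_def by auto
  define mu where "mu = filter (\<lambda>x. 2 \<le> x) xs"
  define rest where "rest = filter (\<lambda>x. \<not> 2 \<le> x) xs"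
  have sp: "xs = mu @ rest" using sorted_split[OF so, of 2] unfolding mu_def rest_def .
  have "\<forall>y\<in>set rest. y = 1" using pos unfolding rest_def by auto
  then have rr: "rest = replicate (length rest) 1" by (simp add: replicate_length_same)
  define r where "r = length mu"
  define m where "m = length rest"
  have xsf: "xs = mu @ replicate m 1" using sp rr unfolding m_def by simp
  obtain s where s: "s \<in> {1..length xs}" and hk: "int (first_col_hook xs s) = int s + h"
     and one: "xs ! (s - 1) = 1"
    using assms(2) unfolding has_fixed_hook_from_part_def by auto
  have lx: "length xs = r + m" using xsf r_def by simp
  have mu2: "\<forall>x\<in>set mu. 2 \<le> x" unfolding mu_def by auto
  have sr: "s \<ge> r + 1"
  proof (rule ccontr)
    assume "\<not> s \<ge> r + 1"
    then have "s - 1 < r" using s by auto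
    then have "xs ! (s - 1) = mu ! (s - 1)" using xsf r_def by (simp add: nth_append)
    moreover have "mu ! (s - 1) \<in> set mu" using \<open>s - 1 < r\<close> r_def by simp
    ultimately show False using one mu2 by fastforce
  qed
  have eq: "int (1 + (r + m - s)) = int s + h"
    using hk one lx unfolding first_col_hook_def by simp
  define j where "j = s - r - 1"
  have hs: "s \<le> r + m" using s lx by simp
  have mj: "int m = int r + h + 1 + 2 * int j" using eq sr hs unfolding j_def by linarith
  have jge: "int j \<ge> - h - int r" using eq sr hs unfolding j_def by linarith
  have sum: "n = sum_list mu + m" using su xsf by (simp add: sum_list_replicate)
  have somu: "sorted_wrt (\<ge>) mu" unfolding mu_def using so by (simp add: sorted_wrt_filter)
  have "(mu, j) \<in> PP h n" unfolding PP_def using somu mu2 jge sum mj r_def by auto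
  moreover have "ff h (mu, j) = xs" unfolding ff_def using xsf mj r_def
    by (metis fst_conv nat_int snd_conv)
  ultimately show ?thesis by force
qed

lemma A_sup:
  assumes "p \<in> PP h n"
  shows "is_partition (ff h p) n \<and> has_fixed_hook_from_part h 1 (ff h p)"
proof -
  obtain mu j where pp: "p = (mu, j)" by (cases p)
  define r where "r = length mu"
  have so: "sorted_wrt (\<ge>) mu" and mu2: "\<forall>x\<in>set mu. 2 \<le> x" and jg: "int j \<ge> - h - int r"
    and eq: "int (sum_list mu) + int r + h + 1 + 2 * int j = int n"
    using assms unfolding pp PP_def r_def by auto
  define m where "m = nat (int r + h + 1 + 2 * int j)"
  have mi: "int m = int r + h + 1 + 2 * int j" unfolding m_def using jg by linarith
  have xs: "ff h p = mu @ replicate m 1" unfolding ff_def pp m_def r_def by simp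
  have part: "is_partition (ff h p) n" unfolding xs is_partition_def
  proof (intro conjI)
    have "sorted_wrt (\<ge>) (replicate m (1::nat))" by (induction m) auto
    then show "sorted_wrt (\<ge>) (mu @ replicate m 1)" using so mu2
      by (fastforce simp: sorted_wrt_append)
    show "\<forall>x\<in>set (mu @ replicate m 1). 0 < x" using mu2 by auto
    show "sum_list (mu @ replicate m 1) = n" using eq mi by (simp add: sum_list_replicate)
  qed
  define s where "s = r + 1 + j"
  have jm: "j < m" using mi jg by linarith
  have nth: "ff h p ! (s - 1) = 1" unfolding xs s_def using jm r_def by (simp add: nth_append)
  have len: "length (ff h p) = r + m" unfolding xs r_def by simp
  have sin: "s \<in> {1..length (ff h p)}" using len jm s_def by simp
  have "int (first_col_hook (ff h p) s) = int s + h"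
    unfolding first_col_hook_def using nth len jm mi s_def by simp
  then have "has_fixed_hook_from_part h 1 (ff h p)"
    unfolding has_fixed_hook_from_part_def using sin nth by blast
  then show ?thesis using part by simp
qed

lemma sum_map_Suc: "sum_list (map Suc xs) = sum_list xs + length xs"
  by (induction xs) auto

lemma B_sub:
  assumes "is_partition ys N" "int (length ys) \<ge> 1 - h" "count_list ys 1 = 1" "int N = int n - h"
  shows "ys \<in> gg ` PP h n"
proof -
  have so: "sorted_wrt (\<ge>) ys" and pos: "\<forall>x\<in>set ys. 0 < x" and su: "sum_list ys = N"
    using assms(1) unfolding is_partition_def by auto
  define a where "a = filter (\<lambda>x. 3 \<le> x) ys"
  define b where "b = filter (\<lambda>x. \<not> 3 \<le> x) ys"
  have sp: "ys = a @ b" using sorted_split[OF so, of 3] unfolding a_def b_def .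
  have sob: "sorted_wrt (\<ge>) b" unfolding b_def using so by (simp add: sorted_wrt_filter)
  define c where "c = filter (\<lambda>x. 2 \<le> x) b"
  define d where "d = filter (\<lambda>x. \<not> 2 \<le> x) b"
  have sp2: "b = c @ d" using sorted_split[OF sob, of 2] unfolding c_def d_def .
  have "\<forall>y\<in>set c. y = 2" unfolding c_def b_def by auto
  then have cc: "c = replicate (length c) 2" by (simp add: replicate_length_same)
  have "\<forall>y\<in>set d. y = 1" using pos unfolding d_def b_def by auto
  then have dd: "d = replicate (length d) 1" by (simp add: replicate_length_same)
  have f3: "filter ((=) 1) ys = filter ((=) 1) a @ filter ((=) 1) c @ filter ((=) 1) d"
    by (subst sp, subst sp2) simp
  have "filter ((=) 1) a = []" unfolding a_def by (auto simp: filter_False)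
  moreover have "filter ((=) 1) c = []" unfolding c_def by (auto simp: filter_False)
  moreover have "filter ((=) 1) d = d" using \<open>\<forall>y\<in>set d. y = 1\<close> by (auto simp: filter_True)
  ultimately have "filter ((=) 1) ys = d" using f3 by simp
  then have "length d = 1" using assms(3) by (simp add: count_list_eq_length_filter)
  then have d1: "d = [1]" using dd by simp
  define j where "j = length c"
  define mu where "mu = map (\<lambda>x. x - 1) a"
  have a3: "\<forall>x\<in>set a. 3 \<le> x" unfolding a_def by auto
  have amu: "map Suc mu = a" unfolding mu_def using a3 by (induction a) auto
  have ys: "ys = map Suc mu @ replicate j 2 @ [1]" using sp sp2 cc d1 amu j_def by simp
  have soa: "sorted_wrt (\<ge>) a" unfolding a_def using so by (simp add: sorted_wrt_filter)
  have somu: "sorted_wrt (\<ge>) mu" unfolding mu_def using soa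
    by (auto simp: sorted_wrt_map elim!: sorted_wrt_mono_rel[rotated])
  have mu2: "\<forall>x\<in>set mu. 2 \<le> x" unfolding mu_def using a3 by auto
  have "sum_list ys = sum_list mu + length mu + 2 * j + 1" unfolding ys
    by (simp add: sum_map_Suc sum_list_replicate)
  then have eq: "int (sum_list mu) + int (length mu) + h + 1 + 2 * int j = int n"
    using su assms(4) by linarith
  have "length ys = length mu + j + 1" unfolding ys by simp
  then have "int j \<ge> - h - int (length mu)" using assms(2) by linarith
  then have "(mu, j) \<in> PP h n" unfolding PP_def using somu mu2 eq by auto
  moreover have "gg (mu, j) = ys" unfolding gg_def ys by simp
  ultimately show ?thesis by force
qed

lemma B_sup:
  assumes "p \<in> PP h n"
  shows "int n - h \<ge> 1 \<and> is_partition (gg p) (nat (int n - h)) \<and> int (length (gg p)) \<ge> 1 - h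
     \<and> count_list (gg p) 1 = 1"
proof -
  obtain mu j where pp: "p = (mu, j)" by (cases p)
  have so: "sorted_wrt (\<ge>) mu" and mu2: "\<forall>x\<in>set mu. 2 \<le> x" and jg: "int j \<ge> - h - int (length mu)"
    and eq: "int (sum_list mu) + int (length mu) + h + 1 + 2 * int j = int n"
    using assms unfolding pp PP_def by auto
  have g: "gg p = map Suc mu @ replicate j 2 @ [1]" unfolding gg_def pp by simp
  have "sum_list (gg p) = sum_list mu + length mu + 2 * j + 1" unfolding g
    by (simp add: sum_map_Suc sum_list_replicate)
  then have sm: "sum_list (gg p) = nat (int n - h)" using eq by linarith
  have "sorted_wrt (\<ge>) (replicate j (2::nat))" by (induction j) auto
  moreover have "sorted_wrt (\<ge>) (map Suc mu)" using so by (simp add: sorted_wrt_map)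
  ultimately have sg: "sorted_wrt (\<ge>) (gg p)" unfolding g using mu2
    by (fastforce simp: sorted_wrt_append)
  have "filter ((=) (Suc 0) \<circ> Suc) mu = []" using mu2 by (force simp: filter_empty_conv)
  then have "count_list (gg p) 1 = 1" unfolding g count_list_eq_length_filter using mu2
    by (auto simp: filter_False)
  moreover have "int (length (gg p)) \<ge> 1 - h" unfolding g using jg by simp
  moreover have "is_partition (gg p) (nat (int n - h))" unfolding is_partition_def using sg sm g by auto
  ultimately show ?thesis using eq by linarith
qed

theorem theorem3p3:
  fixes h :: int and n :: nat
  shows "card {xs. is_partition xs n \<and> has_fixed_hook_from_part h 1 xs} =
    (if int n - h < 0 then 0
     else card {xs. is_partition xs (nat (int n - h)) \<and> int (length xs) \<ge> 1 - h
                    \<and> count_list xs 1 = 1})"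
proof -
  have A: "{xs. is_partition xs n \<and> has_fixed_hook_from_part h 1 xs} = ff h ` PP h n"
    using A_sub A_sup by blast
  have cA: "card {xs. is_partition xs n \<and> has_fixed_hook_from_part h 1 xs} = card (PP h n)"
    unfolding A using ff_inj card_image by blast
  show ?thesis
  proof (cases "int n - h < 0")
    case True
    then have "PP h n = {}" using B_sup by fastforce
    then show ?thesis using cA True by simp
  next
    case False
    have B: "{xs. is_partition xs (nat (int n - h)) \<and> int (length xs) \<ge> 1 - h
                    \<and> count_list xs 1 = 1} = gg ` PP h n"
    proof
      show "gg ` PP h n \<subseteq> {xs. is_partition xs (nat (int n - h)) \<and> int (length xs) \<ge> 1 - h
                    \<and> count_list xs 1 = 1}" using B_sup by blast
      show "{xs. is_partition xs (nat (int n - h)) \<and> int (length xs) \<ge> 1 - h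
                    \<and> count_list xs 1 = 1} \<subseteq> gg ` PP h n"
        using B_sub[where N = "nat (int n - h)" and h = h and n = n] False by auto
    qed
    show ?thesis unfolding B using cA False gg_inj card_image by (metis (no_types, lifting))
  qed
qed

end
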